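(* Let $k\geq 2$ and $\Lambda_{\rm cr}(k)=\frac{k^k}{(k-1)^{k+1}}$. Consider the HC model with countable set of spin values $\mathbb Z$ on the Cayley tree $\Gamma^k$, associated with the graph $G$ on $\mathbb Z$ in which every vertex is adjacent to $0$ and no two vertices of $\mathbb Z_0=\mathbb Z\setminus\{0\}$ are adjacent, with activities $\lambda_j>0$. Then: (1) If the series $\sum_{j\in\mathbb Z_0}\lambda_j$ converges, with sum $\Lambda$, then for $0<\Lambda\leq\Lambda_{\rm cr}$ there exists a unique $G_k^{(2)}$-periodic Gibbs measure $\mu_0$, and it is translation-invariant; and for $\Lambda>\Lambda_{\rm cr}$ there are exactly three $G_k^{(2)}$-periodic Gibbs measures $\mu_0,\mu_1,\mu_2$, where $\mu_0$ is translation-invariant and $\mu_1,\mu_2$ are not translation-invariant. (2) If the series $\sum_{j\in\mathbb Z_0}\lambda_j$ diverges, there is no $G_k^{(2)}$-periodic Gibbs measure.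
   Context: The Cayley tree $\Gamma^k$ of order $k$ is the infinite tree in which every vertex has exactly $k+1$ neighbours; $V$ is its vertex set, identified with the group $G_k$, the free product of $k+1$ cyclic groups of order two; $G_k^{(2)}$ is the subgroup of words of even length. Fix a root $x^0$ (the identity); $|x|$ is the distance from $x^0$ and $S(x)$ the set of direct successors of $x$. A configuration $\sigma:V\to\mathbb Z$ is admissible if $\sigma(x)\sigma(y)=0$ for all nearest neighbours $x,y$. The HC Hamiltonian is $H(\sigma)=J\sum_{x\in V}\ln\lambda_{\sigma(x)}$ for admissible $\sigma$ and $+\infty$ otherwise. Gibbs measures of this model correspond one-to-one to normalisable boundary laws, which (normalised at spin $0$) are families $z_x=(z_{i,x})_{i\in\mathbb Z_0}$ of positive numbers satisfying $z_{i,x}=\lambda_i\prod_{y\in S(x)}\bigl(1+\sum_{j\in\mathbb Z_0}z_{j,y}\bigr)^{-1}$, $i\in\mathbb Z_0$. A measure is $G_k^{(2)}$-periodic if it corresponds to a solution with $z_x=z$ for $|x|$ even and $z_x=\tilde z$ for $|x|$ odd, i.e. to positive sequences $z,\tilde z$ indexed by $\mathbb Z_0$ satisfying $$z_i=\lambda_i\Bigl(1+\sum_{j\in\mathbb Z_0}\tilde z_j\Bigr)^{-k},\qquad \tilde z_i=\lambda_i\Bigl(1+\sum_{j\in\mathbb Z_0}z_j\Bigr)^{-k},\qquad i\in\mathbb Z_0,$$ and it is normalisable if $\sum_i z_i^{(k+1)/k}<\infty$ and $\sum_i\tilde z_i^{(k+1)/k}<\infty$. Translation-invariant measures correspond to solutions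 with $z=\tilde z$. *)

theory Defs
  imports "HOL-Analysis.Analysis"
begin

definition Z0 :: "int set" where
  "Z0 = {j. j \<noteq> 0}"

definition Lambda_cr :: "nat \<Rightarrow> real" where
  "Lambda_cr k = real k ^ k / (real k - 1) ^ (k + 1)"

text \<open>Boundary-law equations for a G_k^(2)-periodic solution (z on even levels,
  zt on odd levels), normalised at spin 0 (z 0 = zt 0 = 1).  The sums over Z0
  are required to converge (otherwise the equations are meaningless).\<close>
definition periodic_bl :: "nat \<Rightarrow> (int \<Rightarrow> real) \<Rightarrow> (int \<Rightarrow> real) \<Rightarrow> (int \<Rightarrow> real) \<Rightarrow> bool" where
  "periodic_bl k lam z zt \<longleftrightarrow>
     z 0 = 1 \<and> zt 0 = 1 \<and>
     (\<forall>i\<in>Z0. z i > 0 \<and> zt i > 0) \<and>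
     z summable_on Z0 \<and> zt summable_on Z0 \<and>
     (\<forall>i\<in>Z0. z i = lam i / (1 + infsum zt Z0) ^ k) \<and>
     (\<forall>i\<in>Z0. zt i = lam i / (1 + infsum z Z0) ^ k)"

definition normalisable :: "nat \<Rightarrow> (int \<Rightarrow> real) \<Rightarrow> (int \<Rightarrow> real) \<Rightarrow> bool" where
  "normalisable k z zt \<longleftrightarrow>
     (\<lambda>i. z i powr ((real k + 1) / real k)) summable_on Z0 \<and>
     (\<lambda>i. zt i powr ((real k + 1) / real k)) summable_on Z0"

text \<open>The G_k^(2)-periodic Gibbs measures of the HC model, identified (via the
  one-to-one correspondence with normalisable boundary laws) with the
  normalisable periodic solutions (z, zt).\<close>
definition periodic_gibbs :: "nat \<Rightarrow> (int \<Rightarrow> real) \<Rightarrow> ((int \<Rightarrow> real) \<times> (int \<Rightarrow> real)) set" where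
  "periodic_gibbs k lam = {(z, zt). periodic_bl k lam z zt \<and> normalisable k z zt}"

definition transl_inv :: "(int \<Rightarrow> real) \<times> (int \<Rightarrow> real) \<Rightarrow> bool" where
  "transl_inv p \<longleftrightarrow> fst p = snd p"

end

theory Submission
  imports Defs
begin


definition gs :: "nat \<Rightarrow> real \<Rightarrow> real" where
  "gs m t = (\<Sum>j<m. t ^ j)"

lemma gs_pos: "t > 0 \<Longrightarrow> m > 0 \<Longrightarrow> gs m t > 0"
  unfolding gs_def by (intro sum_pos) auto

lemma gs_closed: "gs m t * (t - 1) = t ^ m - 1"
  unfolding gs_def using power_diff_1_eq[of t m] by (simp add: mult.commute)

lemma gs_Suc: "gs (Suc m) t = 1 + t * gs m t"
  unfolding gs_def by (subst sum.lessThan_Suc_shift) (simp add: sum_distrib_left)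

lemma amgm_aux:
  fixes r :: real
  assumes "r > 0" "r \<noteq> 1" "k \<ge> 2"
  shows "(\<Sum>j<k. (r^2) ^ j) > real k * r ^ (k - 1)"
proof -
  have refl: "(\<Sum>j<k. (r^2) ^ (k - Suc j)) = (\<Sum>j<k. (r^2) ^ j)"
    by (rule sum.nat_diff_reindex)
  have "(\<Sum>j<k. 2 * r ^ (k - 1)) < (\<Sum>j<k. (r^2) ^ j + (r^2) ^ (k - Suc j))"
  proof (rule sum_strict_mono_ex1)
    show "finite {..<k}" by simp
    show "\<forall>j\<in>{..<k}. 2 * r ^ (k - 1) \<le> (r^2) ^ j + (r^2) ^ (k - Suc j)"
    proof
      fix j assume "j \<in> {..<k}"
      then have jk: "j + (k - Suc j) = k - 1" by auto
      have "0 \<le> (r ^ j - r ^ (k - Suc j))^2" by simp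
      then have "2 * (r ^ j * r ^ (k - Suc j)) \<le> (r^j)^2 + (r ^ (k - Suc j))^2"
        by (simp add: power2_eq_square algebra_simps)
      also have "r ^ j * r ^ (k - Suc j) = r ^ (k - 1)" by (metis jk power_add)
      finally show "2 * r ^ (k - 1) \<le> (r^2) ^ j + (r^2) ^ (k - Suc j)"
        by (simp add: power_mult[symmetric] mult.commute)
    qed
    show "\<exists>j\<in>{..<k}. 2 * r ^ (k - 1) < (r^2) ^ j + (r^2) ^ (k - Suc j)"
    proof (intro bexI[of _ 0])
      have "r ^ (k - 1) \<noteq> 1"
      proof (cases "r < 1")
        case True
        then show ?thesis using assms power_strict_decreasing[of 0 "k-1" r] by auto
      next
        case False
        then have "r > 1" using assms by auto
        moreover have "0 < k - 1" using assms by simp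
        ultimately have "1 < r ^ (k - 1)" by (rule one_less_power)
        then show ?thesis by linarith
      qed
      then have "0 < (1 - r ^ (k - 1))^2" by simp
      then show "2 * r ^ (k - 1) < (r^2) ^ 0 + (r^2) ^ (k - Suc 0)"
        by (simp add: power2_eq_square algebra_simps power_mult[symmetric] power_mult_distrib)
    qed (use assms in auto)
  qed
  then have "2 * (real k * r ^ (k - 1)) < 2 * (\<Sum>j<k. (r^2) ^ j)"
    by (simp add: sum.distrib refl)
  then show ?thesis by simp
qed

lemma E_pos:
  fixes t :: real
  assumes "t > 1" "k \<ge> 2"
  shows "(t ^ k - 1)^2 - real k ^ 2 * t ^ (k - 1) * (t - 1)^2 > 0"
proof -
  define r where "r = sqrt t"
  have r: "r > 0" "r \<noteq> 1" "r^2 = t" using assms by (auto simp: r_def)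
  have "gs k t > real k * r ^ (k - 1)"
    using amgm_aux[OF r(1,2) assms(2)] r(3) by (simp add: gs_def)
  moreover have "real k * r ^ (k - 1) \<ge> 0" using r by simp
  ultimately have "(gs k t)^2 > (real k * r ^ (k - 1))^2"
    by (meson power_strict_mono zero_less_numeral)
  also have "(real k * r ^ (k - 1))^2 = real k ^ 2 * t ^ (k - 1)"
    by (simp add: power_mult_distrib r(3)[symmetric] power_mult[symmetric] mult.commute)
  finally have "(gs k t)^2 - real k ^ 2 * t ^ (k - 1) > 0" by simp
  moreover have "(t - 1)^2 > 0" using assms by simp
  ultimately have "(t - 1)^2 * ((gs k t)^2 - real k ^ 2 * t ^ (k - 1)) > 0" by simp
  also have "(t - 1)^2 * ((gs k t)^2 - real k ^ 2 * t ^ (k - 1)) =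
     (gs k t * (t - 1))^2 - real k ^ 2 * t ^ (k - 1) * (t - 1)^2"
    by (simp add: algebra_simps power2_eq_square)
  finally show ?thesis by (simp add: gs_closed)
qed


definition LL :: "nat \<Rightarrow> real \<Rightarrow> real" where
  "LL k t = gs k t ^ k / (t * gs (k - 1) t ^ (k + 1))"


definition GG :: "nat \<Rightarrow> real \<Rightarrow> real" where
  "GG k t = ln (t - 1) + real k * ln (t ^ k - 1) - ln t - real (k + 1) * ln (t ^ (k - 1) - 1)"

definition GG' :: "nat \<Rightarrow> real \<Rightarrow> real" where
  "GG' k t = 1 / (t - 1) + (real k)^2 * t ^ (k - 1) / (t ^ k - 1) - 1 / t
      - ((real k)^2 - 1) * t ^ (k - 1) / (t * (t ^ (k - 1) - 1))"

lemma aux_frac: fixes x y kk :: real assumes "x \<noteq> 0"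
  shows "(kk + 1) * (((kk - 1) * y) / (x * y - 1)) = (kk^2 - 1) * (x * y) / (x * (x * y - 1))"
proof -
  have h: "(kk + 1) * ((kk - 1) * y) = (kk^2 - 1) * y" by (simp add: algebra_simps power2_eq_square)
  have "(kk + 1) * (((kk - 1) * y) / (x * y - 1)) = (kk + 1) * ((kk - 1) * y) / (x * y - 1)" by simp
  also have "\<dots> = (kk^2 - 1) * y / (x * y - 1)" by (simp only: h)
  also have "\<dots> = x * ((kk^2 - 1) * y) / (x * (x * y - 1))"
    using assms by (rule mult_divide_mult_cancel_left[symmetric])
  also have "\<dots> = (kk^2 - 1) * (x * y) / (x * (x * y - 1))" by (simp add: mult_ac)
  finally show ?thesis .
qed

lemma GG_deriv:
  assumes "x > 1" "k \<ge> 2"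
  shows "(GG k has_real_derivative GG' k x) (at x)"
proof -
  have p1: "x ^ k > 1" "x ^ (k - 1) > 1" using assms by auto
  have "(GG k has_real_derivative
      (1 / (x - 1) + real k * ((real k * x ^ (k - 1)) / (x ^ k - 1)) - 1 / x
        - real (k + 1) * ((real (k - 1) * x ^ (k - 1 - 1)) / (x ^ (k - 1) - 1)))) (at x)"
    unfolding GG_def using assms p1
    apply (auto intro!: derivative_eq_intros)
    apply (simp add: algebra_simps)
    done
  moreover have "real (k + 1) * ((real (k - 1) * x ^ (k - 1 - 1)) / (x ^ (k - 1) - 1))
      = ((real k)^2 - 1) * x ^ (k - 1) / (x * (x ^ (k - 1) - 1))"
  proof -
    have "k - 1 = Suc (k - 1 - 1)" using assms by simp
    then have e: "x ^ (k - 1) = x * x ^ (k - 1 - 1)" by (metis power_Suc)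
    have r: "real (k - 1) = real k - 1" "real (k + 1) = real k + 1" using assms by auto
    show ?thesis unfolding e r by (rule aux_frac) (use assms in simp)
  qed
  ultimately show ?thesis unfolding GG'_def by (simp add: power2_eq_square mult.assoc)
qed
lemma s1: fixes x a kk :: real
  assumes n: "x \<noteq> 0" "x - 1 \<noteq> 0" "x * a - 1 \<noteq> 0" "a - 1 \<noteq> 0"
  shows "(1 / (x - 1) + kk * a / (x * a - 1) - 1 / x
      - (kk - 1) * a / (x * (a - 1))) * (x * (x - 1) * (x * a - 1) * (a - 1))
   = (x * a - 1)^2 - kk * a * (x - 1)^2"
proof -
  define D where "D = x * (x - 1) * (x * a - 1) * (a - 1)"
  have "(1 / (x - 1) + kk * a / (x * a - 1) - 1 / x
      - (kk - 1) * a / (x * (a - 1))) * D = 1 / (x - 1) * D + kk * a / (x * a - 1) * D - 1 / x * D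
      - (kk - 1) * a / (x * (a - 1)) * D" by (simp only: distrib_right left_diff_distrib)
    also have "1 / (x - 1) * D = x * (x * a - 1) * (a - 1)"
    proof -
      have "D = (x - 1) * (x * (x * a - 1) * (a - 1))" unfolding D_def by (simp add: mult_ac)
      then show ?thesis using n by simp
    qed
    also have "kk * a / (x * a - 1) * D = kk * a * x * (x - 1) * (a - 1)"
    proof -
      have "D = (x * a - 1) * (x * (x - 1) * (a - 1))" unfolding D_def by (simp add: mult_ac)
      then show ?thesis using n by simp
    qed
    also have "1 / x * D = (x - 1) * (x * a - 1) * (a - 1)"
    proof -
      have "D = x * ((x - 1) * (x * a - 1) * (a - 1))" unfolding D_def by (simp add: mult_ac)
      then show ?thesis using n by simp
    qed
    also have "(kk - 1) * a / (x * (a - 1)) * D = (kk - 1) * a * (x - 1) * (x * a - 1)"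
    proof -
      have "D = (x * (a - 1)) * ((x - 1) * (x * a - 1))" unfolding D_def by (simp add: mult_ac)
      then show ?thesis using n by simp
    qed
    also have "x * (x * a - 1) * (a - 1) + kk * a * x * (x - 1) * (a - 1)
       - (x - 1) * (x * a - 1) * (a - 1) - (kk - 1) * a * (x - 1) * (x * a - 1)
       = (x * a - 1)^2 - kk * a * (x - 1)^2"
      by (simp add: algebra_simps power2_eq_square)
    finally show ?thesis unfolding D_def .
qed

lemma GG'_pos:
  assumes "x > 1" "k \<ge> 2"
  shows "GG' k x > 0"
proof -
  define a where "a = x ^ (k - 1)"
  have "k = Suc (k - 1)" using assms by simp
  then have "x ^ k = x ^ Suc (k - 1)" by simp
  then have xk: "x ^ k = x * a" unfolding a_def by simp
  have a1: "a > 1" unfolding a_def using assms by simp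
  have xa: "x * a > 1" using a1 assms by (simp add: less_1_mult)
  have E: "(x * a - 1)^2 - (real k)^2 * a * (x - 1)^2 > 0"
    using E_pos[OF assms] unfolding xk a_def by simp
  have n: "x \<noteq> 0" "x - 1 \<noteq> 0" "x * a - 1 \<noteq> 0" "a - 1 \<noteq> 0" using assms a1 xa by auto
  have g: "GG' k x = 1 / (x - 1) + (real k)^2 * a / (x * a - 1) - 1 / x
      - ((real k)^2 - 1) * a / (x * (a - 1))" unfolding GG'_def a_def[symmetric] xk by simp
  have id: "GG' k x * (x * (x - 1) * (x * a - 1) * (a - 1)) = (x * a - 1)^2 - (real k)^2 * a * (x - 1)^2"
    unfolding g by (rule s1[OF n])
  have "x * (x - 1) * (x * a - 1) * (a - 1) > 0" using assms a1 xa by simp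
  then show ?thesis using id E zero_less_mult_pos2 by metis
qed


lemma exp_GG:
  assumes "x > 1" "k \<ge> 2"
  shows "exp (GG k x) = LL k x"
proof -
  have p1: "x ^ k - 1 > 0" "x ^ (k - 1) - 1 > 0" using assms by auto
  have "exp (GG k x) = exp (ln (x - 1)) * exp (ln (x ^ k - 1)) ^ k / exp (ln x)
         / exp (ln (x ^ (k - 1) - 1)) ^ (k + 1)"
    unfolding GG_def exp_add exp_diff exp_of_nat_mult by simp
  also have "\<dots> = (x - 1) * (x ^ k - 1) ^ k / x / (x ^ (k - 1) - 1) ^ (k + 1)"
    using assms p1 by simp
  also have "\<dots> = (x - 1) * (gs k x * (x - 1)) ^ k / x / (gs (k - 1) x * (x - 1)) ^ (k + 1)"
    by (simp only: gs_closed)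
  also have "\<dots> = ((x - 1) ^ (k + 1) * gs k x ^ k) / ((x - 1) ^ (k + 1) * (x * gs (k - 1) x ^ (k + 1)))"
  proof -
    have f1: "(x - 1) * (gs k x * (x - 1)) ^ k = (x - 1) ^ (k + 1) * gs k x ^ k"
      by (simp add: power_mult_distrib)
    have f2: "(gs (k - 1) x * (x - 1)) ^ (k + 1) = (x - 1) ^ (k + 1) * gs (k - 1) x ^ (k + 1)"
      by (simp only: power_mult_distrib mult.commute)
    have f3: "x * ((x - 1) ^ (k + 1) * gs (k - 1) x ^ (k + 1)) = (x - 1) ^ (k + 1) * (x * gs (k - 1) x ^ (k + 1))"
      by (rule mult.left_commute)
    show ?thesis by (simp only: f1 f2 f3 divide_divide_eq_left)
  qed
  also have "\<dots> = LL k x" unfolding LL_def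
    by (rule mult_divide_mult_cancel_left) (use assms in simp)
  finally show ?thesis .
qed

lemma LL_pos: "t > 0 \<Longrightarrow> k \<ge> 2 \<Longrightarrow> LL k t > 0"
  unfolding LL_def using gs_pos[of t k] gs_pos[of t "k - 1"] by simp

lemma LL_deriv:
  assumes "x > 1" "k \<ge> 2"
  shows "(LL k has_real_derivative LL k x * GG' k x) (at x)"
proof -
  have "((\<lambda>t. exp (GG k t)) has_real_derivative exp (GG k x) * GG' k x) (at x)"
    using GG_deriv[OF assms] by (rule DERIV_fun_exp)
  then have "((\<lambda>t. exp (GG k t)) has_real_derivative LL k x * GG' k x) (at x)"
    using exp_GG[OF assms] by simp
  then show ?thesis
    by (rule has_field_derivative_transform_within_open[where S = "{1<..}"])
       (use assms exp_GG in auto)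
qed

lemma LL_cont: "k \<ge> 2 \<Longrightarrow> continuous_on {0<..} (LL k)"
  unfolding LL_def gs_def
  apply (intro continuous_intros)
  using gs_pos unfolding gs_def by (auto simp: less_imp_neq[symmetric])

lemma LL_mono:
  assumes "1 \<le> a" "a < b" "k \<ge> 2"
  shows "LL k a < LL k b"
proof (rule DERIV_pos_imp_increasing_open[OF assms(2)])
  fix x assume "a < x" "x < b"
  then have x: "x > 1" using assms by simp
  show "\<exists>y. (LL k has_real_derivative y) (at x) \<and> 0 < y"
    using LL_deriv[OF x assms(3)] LL_pos[of x k] GG'_pos[OF x assms(3)] x assms(3) by auto
next
  show "continuous_on {a..b} (LL k)"
    by (rule continuous_on_subset[OF LL_cont[OF assms(3)]]) (use assms in auto)
qed

lemma gs_one: "gs m 1 = real m" unfolding gs_def by simp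

lemma LL_one: "k \<ge> 2 \<Longrightarrow> LL k 1 = Lambda_cr k"
  unfolding LL_def Lambda_cr_def gs_one by (simp add: of_nat_diff)

lemma gs_le: assumes "t \<ge> 1" shows "gs m t \<le> real m * t ^ (m - 1)"
proof -
  have "gs m t \<le> (\<Sum>j<m. t ^ (m - 1))" unfolding gs_def
    by (intro sum_mono power_increasing) (use assms in auto)
  then show ?thesis by simp
qed

lemma LL_big:
  assumes "t \<ge> 1" "k \<ge> 2"
  shows "LL k t \<ge> t / (real k - 1)"
proof -
  have g: "gs (k - 1) t > 0" using gs_pos[of t "k - 1"] assms by simp
  have "gs k t = 1 + t * gs (k - 1) t" using gs_Suc[of "k - 1" t] assms by simp
  then have "gs k t \<ge> t * gs (k - 1) t" by simp
  then have "gs k t ^ k \<ge> (t * gs (k - 1) t) ^ k"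
    by (rule power_mono) (use assms g in simp)
  then have "LL k t \<ge> (t * gs (k - 1) t) ^ k / (t * gs (k - 1) t ^ (k + 1))"
    unfolding LL_def by (rule divide_right_mono) (use assms g in simp)
  also have "(t * gs (k - 1) t) ^ k / (t * gs (k - 1) t ^ (k + 1)) = t ^ (k - 1) / gs (k - 1) t"
  proof -
    have "k = Suc (k - 1)" using assms by simp
    then have "t ^ k = t * t ^ (k - 1)" by (metis power_Suc)
    then show ?thesis using assms g by (simp add: power_mult_distrib field_simps)
  qed
  also have "t ^ (k - 1) / gs (k - 1) t \<ge> t ^ (k - 1) / (real (k - 1) * t ^ (k - 1 - 1))"
    by (rule divide_left_mono) (use gs_le[OF assms(1), of "k - 1"] g assms in auto)
  also have "t ^ (k - 1) / (real (k - 1) * t ^ (k - 1 - 1)) = t / (real k - 1)"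
  proof -
    have "k - 1 = Suc (k - 1 - 1)" using assms by simp
    then have "t ^ (k - 1) = t * t ^ (k - 1 - 1)" by (metis power_Suc)
    then show ?thesis using assms by (simp add: of_nat_diff)
  qed
  finally show ?thesis .
qed


definition sol :: "nat \<Rightarrow> real \<Rightarrow> (real \<times> real) set" where
  "sol k L = {(S, T). S > 0 \<and> T > 0 \<and> S * (1 + T) ^ k = L \<and> T * (1 + S) ^ k = L}"

lemma sol_swap: "(S, T) \<in> sol k L \<Longrightarrow> (T, S) \<in> sol k L"
  unfolding sol_def by auto

lemma diag_mono: "0 \<le> x \<Longrightarrow> x < y \<Longrightarrow> x * (1 + x) ^ k < y * (1 + (y::real)) ^ k"
  by (rule mult_less_le_imp_less) (auto intro: power_mono)

lemma diag_ex1: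
  fixes L :: real
  assumes "L > 0"
  shows "\<exists>!x. x > 0 \<and> x * (1 + x) ^ k = L"
proof -
  have c: "continuous_on {0..L} (\<lambda>x. x * (1 + x) ^ k)" by (intro continuous_intros)
  have "L \<le> L * (1 + L) ^ k"
    using assms by (simp add: one_le_power)
  then obtain x where x: "0 \<le> x" "x \<le> L" "x * (1 + x) ^ k = L"
    using IVT'[of "\<lambda>x. x * (1 + x) ^ k" 0 L L, OF _ _ _ c] assms by auto
  then have "x > 0" using assms by (cases "x = 0") auto
  moreover have "y = x" if "y > 0" "y * (1 + y) ^ k = L" for y
    using diag_mono[of x y k] diag_mono[of y x k] x that
    by (cases "y < x"; cases "x < y") auto
  ultimately show ?thesis using x by blast
qed

definition par :: "nat \<Rightarrow> real \<Rightarrow> real \<times> real" where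
  "par k t = (t ^ (k - 1) / gs (k - 1) t, 1 / (t * gs (k - 1) t))"

lemma gs_Suc': "gs (Suc m) t = gs m t + t ^ m"
  unfolding gs_def by simp

lemma par_sol:
  assumes "t > 1" "k \<ge> 2" "LL k t = L"
  shows "par k t \<in> sol k L" "fst (par k t) > snd (par k t)"
proof -
  define g where "g = gs (k - 1) t"
  have g: "g > 0" unfolding g_def using gs_pos[of t "k - 1"] assms by simp
  have k1: "k = Suc (k - 1)" using assms by simp
  have gk: "gs k t = 1 + t * g" unfolding g_def using gs_Suc[of "k - 1" t] k1 by simp
  have gk': "gs k t = g + t ^ (k - 1)" unfolding g_def using gs_Suc'[of "k - 1" t] k1 by simp
  have tk: "t ^ k = t * t ^ (k - 1)" using k1 by (metis power_Suc)
  have t0: "t > 0" using assms by simp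
  have e1: "1 + 1 / (t * g) = gs k t / (t * g)" using g t0 gk by (simp add: field_simps)
  have e2: "1 + t ^ (k - 1) / g = gs k t / g" using g gk' by (simp add: field_simps)
  have "t ^ (k - 1) / g * (1 + 1 / (t * g)) ^ k = L"
    unfolding e1 assms(3)[symmetric] LL_def g_def[symmetric] using g t0
    by (simp add: power_divide power_mult_distrib tk field_simps)
  moreover have "1 / (t * g) * (1 + t ^ (k - 1) / g) ^ k = L"
    unfolding e2 assms(3)[symmetric] LL_def g_def[symmetric] using g t0
    by (simp add: power_divide power_mult_distrib field_simps)
  moreover have "t ^ (k - 1) / g > 0" using g t0 by simp
  moreover have "1 / (t * g) > 0" using g t0 by simp
  ultimately show "par k t \<in> sol k L" unfolding par_def sol_def g_def[symmetric] by simp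
  have "t ^ k > 1" using assms by simp
  then have "t * t ^ (k - 1) > 1" using tk by simp
  then have "t ^ (k - 1) / g > 1 / (t * g)" using g t0 by (simp add: field_simps)
  then show "fst (par k t) > snd (par k t)" unfolding par_def g_def[symmetric] by simp
qed

lemma sol_par:
  assumes "(S, T) \<in> sol k L" "S > T" "k \<ge> 2"
  shows "(1 + S) / (1 + T) > 1" "LL k ((1 + S) / (1 + T)) = L" "(S, T) = par k ((1 + S) / (1 + T))"
proof -
  define t where "t = (1 + S) / (1 + T)"
  have S: "S > 0" "T > 0" "S * (1 + T) ^ k = L" "T * (1 + S) ^ k = L" using assms(1) unfolding sol_def by auto
  show t1: "(1 + S) / (1 + T) > 1" using S assms by simp
  then have t1': "t > 1" unfolding t_def .
  define g where "g = gs (k - 1) t"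
  have g: "g > 0" unfolding g_def using gs_pos[of t "k - 1"] assms t1' by simp
  have k1: "k = Suc (k - 1)" using assms by simp
  have gk: "gs k t = 1 + t * g" unfolding g_def using gs_Suc[of "k - 1" t] k1 by simp
  have tk: "t ^ k = t * t ^ (k - 1)" using k1 by (metis power_Suc)
  have u: "1 + S = t * (1 + T)" unfolding t_def using S by simp
  have "S * (1 + T) ^ k = T * t ^ k * (1 + T) ^ k" using S u by (simp add: power_mult_distrib)
  then have Sx: "S = T * t ^ k" using S by simp
  then have "1 + T * t ^ k = t * (1 + T)" using u by simp
  then have "T * (t ^ k - t) = t - 1" by (simp add: algebra_simps)
  moreover have "t ^ k - t = t * g * (t - 1)"
  proof -
    have "t ^ k - t = t * (t ^ (k - 1) - 1)" using tk by (simp add: algebra_simps)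
    also have "t ^ (k - 1) - 1 = g * (t - 1)" using gs_closed[of "k - 1" t] unfolding g_def by simp
    finally show ?thesis by (simp add: mult_ac)
  qed
  ultimately have "(T * t * g) * (t - 1) = 1 * (t - 1)" by (simp add: mult_ac)
  then have Tg: "T * t * g = 1" using t1' by simp
  then have Tx: "T = 1 / (t * g)" using g t1' by (simp add: field_simps)
  have Sx': "S = t ^ (k - 1) / g" using Sx Tx tk g t1' by (simp add: field_simps)
  show "(S, T) = par k ((1 + S) / (1 + T))"
    unfolding t_def[symmetric] par_def g_def[symmetric] using Sx' Tx by simp
  have "LL k t = L"
  proof -
    have "par k t \<in> sol k (LL k t)" using par_sol[OF t1' assms(3) refl] by simp
    then have "(S, T) \<in> sol k (LL k t)"
      using Sx' Tx unfolding par_def g_def[symmetric] by simp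
    then show ?thesis using S unfolding sol_def by auto
  qed
  then show "LL k ((1 + S) / (1 + T)) = L" unfolding t_def .
qed


lemma LL_inj:
  assumes "1 \<le> s" "1 \<le> t" "LL k s = LL k t" "k \<ge> 2"
  shows "s = t"
  using LL_mono[of s t k] LL_mono[of t s k] assms by (cases "s < t"; cases "t < s") auto

lemma sol_diag:
  assumes "(S, S) \<in> sol k L" "x > 0" "x * (1 + x) ^ k = L"
  shows "S = x"
  using assms diag_mono[of x S k] diag_mono[of S x k] unfolding sol_def
  by (cases "S < x"; cases "x < S") auto

lemma sol_small:
  assumes "k \<ge> 2" "L > 0" "L \<le> Lambda_cr k"
  shows "\<exists>x. sol k L = {(x, x)}"
proof -
  obtain x where x: "x > 0" "x * (1 + x) ^ k = L" using diag_ex1[OF assms(2), of k] by blast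
  have no: False if "(S, T) \<in> sol k L" "S > T" for S T
  proof -
    have "LL k 1 < LL k ((1 + S) / (1 + T))"
      using LL_mono[of 1 "(1 + S) / (1 + T)" k] sol_par[OF that assms(1)] assms by simp
    then show False using sol_par[OF that assms(1)] LL_one[OF assms(1)] assms by simp
  qed
  have "sol k L = {(x, x)}"
  proof
    show "{(x, x)} \<subseteq> sol k L" using x unfolding sol_def by auto
    show "sol k L \<subseteq> {(x, x)}"
    proof
      fix p assume p: "p \<in> sol k L"
      obtain S T where pST: "p = (S, T)" by (cases p)
      have "\<not> S > T" using no p pST by blast
      moreover have "\<not> T > S" using no sol_swap p pST by blast
      ultimately have "S = T" by simp
      then show "p \<in> {(x, x)}" using sol_diag[of S k L x] p pST x by simp
    qed
  qed
  then show ?thesis by blast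
qed

lemma sol_large:
  assumes "k \<ge> 2" "L > Lambda_cr k"
  shows "\<exists>x S0 T0. sol k L = {(x, x), (S0, T0), (T0, S0)} \<and> S0 \<noteq> T0"
proof -
  have Lc: "Lambda_cr k > 0" using LL_one[OF assms(1)] LL_pos[of 1 k] assms by simp
  then have L0: "L > 0" using assms by simp
  obtain x where x: "x > 0" "x * (1 + x) ^ k = L" using diag_ex1[OF L0, of k] by blast
  define b where "b = 1 + L * (real k - 1)"
  have k1: "real k - 1 > 0" using assms by simp
  have b1: "b \<ge> 1" unfolding b_def using L0 k1 by simp
  have "L \<le> b / (real k - 1)" unfolding b_def using k1 L0 by (simp add: field_simps)
  also have "\<dots> \<le> LL k b" using LL_big[OF b1 assms(1)] .
  finally have Lb: "L \<le> LL k b" .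
  have c: "continuous_on {1..b} (LL k)"
    by (rule continuous_on_subset[OF LL_cont[OF assms(1)]]) auto
  obtain t0 where t0: "1 \<le> t0" "t0 \<le> b" "LL k t0 = L"
    using IVT'[of "LL k" 1 L b, OF _ Lb b1 c] LL_one[OF assms(1)] assms by auto
  have t01: "t0 > 1" using t0 LL_one[OF assms(1)] assms by (cases "t0 = 1") auto
  obtain S0 T0 where ST0: "par k t0 = (S0, T0)" by (cases "par k t0")
  have in0: "(S0, T0) \<in> sol k L" "S0 > T0" using par_sol[OF t01 assms(1) t0(3)] ST0 by auto
  have uniq: "(S, T) = (S0, T0)" if "(S, T) \<in> sol k L" "S > T" for S T
  proof -
    have "(1 + S) / (1 + T) = t0"
      using LL_inj[of "(1 + S) / (1 + T)" t0 k] sol_par[OF that assms(1)] t0 assms by simp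
    then show ?thesis using sol_par(3)[OF that assms(1)] ST0 by simp
  qed
  have "sol k L = {(x, x), (S0, T0), (T0, S0)}"
  proof
    show "{(x, x), (S0, T0), (T0, S0)} \<subseteq> sol k L"
      using x in0 sol_swap[OF in0(1)] unfolding sol_def by auto
    show "sol k L \<subseteq> {(x, x), (S0, T0), (T0, S0)}"
    proof
      fix p assume p: "p \<in> sol k L"
      obtain S T where pST: "p = (S, T)" by (cases p)
      consider "S > T" | "T > S" | "S = T" by linarith
      then show "p \<in> {(x, x), (S0, T0), (T0, S0)}"
      proof cases
        case 1 then show ?thesis using uniq p pST by auto
      next
        case 2 then have "(T, S) = (S0, T0)" using uniq sol_swap p pST by blast
        then show ?thesis using pST by auto
      next
        case 3 then show ?thesis using sol_diag[of S k L x] p pST x by simp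
      qed
    qed
  qed
  then show ?thesis using in0 by auto
qed


definition mk :: "(int \<Rightarrow> real) \<Rightarrow> nat \<Rightarrow> real \<times> real \<Rightarrow> (int \<Rightarrow> real) \<times> (int \<Rightarrow> real)" where
  "mk lam k p = ((\<lambda>i. if i = 0 then 1 else lam i / (1 + snd p) ^ k),
                 (\<lambda>i. if i = 0 then 1 else lam i / (1 + fst p) ^ k))"

lemma Z0_iff: "i \<in> Z0 \<longleftrightarrow> i \<noteq> 0" unfolding Z0_def by simp

lemma one_Z0: "(1::int) \<in> Z0" unfolding Z0_def by simp

lemma term_le_infsum:
  fixes f :: "int \<Rightarrow> real"
  assumes "f summable_on A" "\<And>j. j \<in> A \<Longrightarrow> f j \<ge> 0" "i \<in> A"
  shows "f i \<le> infsum f A"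
proof -
  have "infsum f {i} \<le> infsum f A"
    by (rule infsum_mono_neutral) (use assms in auto)
  then show ?thesis by simp
qed

lemma hs_div:
  fixes f :: "int \<Rightarrow> real"
  assumes "f summable_on A"
  shows "((\<lambda>i. f i / c) has_sum (infsum f A / c)) A"
  by (rule has_sum_divide_const) (use assms in \<open>simp add: has_sum_infsum\<close>)

lemma pow_summ:
  fixes lam :: "int \<Rightarrow> real"
  assumes "lam summable_on A" "\<And>j. j \<in> A \<Longrightarrow> lam j \<ge> 0" "d \<ge> 1" "p \<ge> 1"
  shows "(\<lambda>i. (lam i / d) powr p) summable_on A"
proof (rule summable_on_comparison_test)
  show "(\<lambda>i. lam i * infsum lam A powr (p - 1)) summable_on A"
    by (rule summable_on_cmult_left[OF assms(1)])
  fix i assume i: "i \<in> A"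
  have l0: "lam i \<ge> 0" using assms(2) i .
  show "0 \<le> (lam i / d) powr p" by simp
  have q0: "0 \<le> lam i / d" using l0 assms(3) by simp
  have q1: "lam i / d \<le> lam i" using l0 assms(3) by (simp add: divide_le_eq mult_le_cancel_left1)
  have q2: "lam i \<le> infsum lam A" using term_le_infsum[OF assms(1,2) i] by simp
  have "(lam i / d) powr p = (lam i / d) powr (1 + (p - 1))" by simp
  also have "\<dots> = (lam i / d) * (lam i / d) powr (p - 1)"
    by (simp only: powr_add powr_one[OF q0])
  also have "\<dots> \<le> lam i * infsum lam A powr (p - 1)"
    by (rule mult_mono[OF q1 powr_mono2]) (use assms q0 q1 q2 l0 in auto)
  finally show "(lam i / d) powr p \<le> lam i * infsum lam A powr (p - 1)" .
qed

lemma pg_lam_summable: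
  assumes "(z, zt) \<in> periodic_gibbs k lam"
  shows "lam summable_on Z0"
proof -
  let ?T = "infsum zt Z0"
  have bl: "periodic_bl k lam z zt" using assms unfolding periodic_gibbs_def by simp
  then have pos: "\<forall>i\<in>Z0. zt i > 0" unfolding periodic_bl_def by blast
  have T0: "?T \<ge> 0"
    by (rule infsum_nonneg) (use pos in \<open>auto intro: less_imp_le\<close>)
  have c: "(1 + ?T) ^ k \<noteq> 0" using T0 by simp
  have "(\<lambda>i. z i * (1 + ?T) ^ k) summable_on Z0"
    using assms unfolding periodic_gibbs_def periodic_bl_def by (auto intro: summable_on_cmult_left)
  moreover have "\<And>i. i \<in> Z0 \<Longrightarrow> z i * (1 + ?T) ^ k = lam i"
    using assms c unfolding periodic_gibbs_def periodic_bl_def by auto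
  ultimately show ?thesis using summable_on_cong by metis
qed

lemma pg_sub:
  assumes "lam summable_on Z0" "\<forall>j. lam j > 0" "k \<ge> 2"
  shows "periodic_gibbs k lam \<subseteq> mk lam k ` sol k (infsum lam Z0)"
proof
  fix p assume p: "p \<in> periodic_gibbs k lam"
  obtain z zt where pz: "p = (z, zt)" by (cases p)
  have bl: "periodic_bl k lam z zt" using p pz unfolding periodic_gibbs_def by auto
  define S where "S = infsum z Z0"
  define T where "T = infsum zt Z0"
  have S0: "S > 0"
  proof -
    have "z 1 \<le> S" unfolding S_def
      by (rule term_le_infsum) (use bl one_Z0 in \<open>auto simp: periodic_bl_def less_imp_le\<close>)
    then show ?thesis using bl one_Z0 unfolding periodic_bl_def by fastforce
  qed
  have T0: "T > 0"
  proof -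
    have "zt 1 \<le> T" unfolding T_def
      by (rule term_le_infsum) (use bl one_Z0 in \<open>auto simp: periodic_bl_def less_imp_le\<close>)
    then show ?thesis using bl one_Z0 unfolding periodic_bl_def by fastforce
  qed
  have zi: "\<And>i. i \<in> Z0 \<Longrightarrow> z i = lam i / (1 + T) ^ k"
    using bl unfolding periodic_bl_def T_def by auto
  have zti: "\<And>i. i \<in> Z0 \<Longrightarrow> zt i = lam i / (1 + S) ^ k"
    using bl unfolding periodic_bl_def S_def by auto
  have "S = infsum (\<lambda>i. lam i / (1 + T) ^ k) Z0" unfolding S_def by (rule infsum_cong) (rule zi)
  also have "\<dots> = infsum lam Z0 / (1 + T) ^ k" using hs_div[OF assms(1)] by (rule infsumI)
  finally have e1: "S * (1 + T) ^ k = infsum lam Z0" using T0 by (simp add: field_simps)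
  have "T = infsum (\<lambda>i. lam i / (1 + S) ^ k) Z0" unfolding T_def by (rule infsum_cong) (rule zti)
  also have "\<dots> = infsum lam Z0 / (1 + S) ^ k" using hs_div[OF assms(1)] by (rule infsumI)
  finally have e2: "T * (1 + S) ^ k = infsum lam Z0" using S0 by (simp add: field_simps)
  have sol: "(S, T) \<in> sol k (infsum lam Z0)" unfolding sol_def using S0 T0 e1 e2 by auto
  have "z = fst (mk lam k (S, T))"
  proof
    fix i show "z i = fst (mk lam k (S, T)) i"
      using bl zi unfolding mk_def periodic_bl_def Z0_iff by auto
  qed
  moreover have "zt = snd (mk lam k (S, T))"
  proof
    fix i show "zt i = snd (mk lam k (S, T)) i"
      using bl zti unfolding mk_def periodic_bl_def Z0_iff by auto
  qed
  ultimately have "p = mk lam k (S, T)" using pz by (simp add: prod_eq_iff)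
  then show "p \<in> mk lam k ` sol k (infsum lam Z0)" using sol by blast
qed

lemma pg_sup:
  assumes "lam summable_on Z0" "\<forall>j. lam j > 0" "k \<ge> 2"
  shows "mk lam k ` sol k (infsum lam Z0) \<subseteq> periodic_gibbs k lam"
proof
  fix p assume "p \<in> mk lam k ` sol k (infsum lam Z0)"
  then obtain S T where ST: "(S, T) \<in> sol k (infsum lam Z0)" "p = mk lam k (S, T)" by auto
  have S: "S > 0" "T > 0" "S * (1 + T) ^ k = infsum lam Z0" "T * (1 + S) ^ k = infsum lam Z0"
    using ST unfolding sol_def by auto
  define z where "z = fst p"
  define zt where "zt = snd p"
  have zi: "\<And>i. i \<in> Z0 \<Longrightarrow> z i = lam i / (1 + T) ^ k"
    unfolding z_def ST(2) mk_def Z0_iff by auto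
  have zti: "\<And>i. i \<in> Z0 \<Longrightarrow> zt i = lam i / (1 + S) ^ k"
    unfolding zt_def ST(2) mk_def Z0_iff by auto
  have hz: "(z has_sum (infsum lam Z0 / (1 + T) ^ k)) Z0"
  proof -
    have "(z has_sum (infsum lam Z0 / (1 + T) ^ k)) Z0 \<longleftrightarrow>
      ((\<lambda>i. lam i / (1 + T) ^ k) has_sum (infsum lam Z0 / (1 + T) ^ k)) Z0"
      by (rule has_sum_cong) (rule zi)
    then show ?thesis using hs_div[OF assms(1)] by blast
  qed
  have hzt: "(zt has_sum (infsum lam Z0 / (1 + S) ^ k)) Z0"
  proof -
    have "(zt has_sum (infsum lam Z0 / (1 + S) ^ k)) Z0 \<longleftrightarrow>
      ((\<lambda>i. lam i / (1 + S) ^ k) has_sum (infsum lam Z0 / (1 + S) ^ k)) Z0"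
      by (rule has_sum_cong) (rule zti)
    then show ?thesis using hs_div[OF assms(1)] by blast
  qed
  have sz: "infsum z Z0 = S"
  proof -
    have "infsum z Z0 = infsum lam Z0 / (1 + T) ^ k" using hz by (rule infsumI)
    also have "\<dots> = S" using S(2) by (simp flip: S(3))
    finally show ?thesis .
  qed
  have szt: "infsum zt Z0 = T"
  proof -
    have "infsum zt Z0 = infsum lam Z0 / (1 + S) ^ k" using hzt by (rule infsumI)
    also have "\<dots> = T" using S(1) by (simp flip: S(4))
    finally show ?thesis .
  qed
  have bl: "periodic_bl k lam z zt"
    unfolding periodic_bl_def sz szt
  proof (intro conjI ballI)
    show "z 0 = 1" "zt 0 = 1" unfolding z_def zt_def ST(2) mk_def by auto
    show "z summable_on Z0" "zt summable_on Z0" using hz hzt by (auto simp: summable_on_def)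
    fix i assume i: "i \<in> Z0"
    show "z i = lam i / (1 + T) ^ k" "zt i = lam i / (1 + S) ^ k" using zi zti i by auto
    show "0 < z i" "0 < zt i" using zi zti i assms S by auto
  qed
  have pp: "(real k + 1) / real k \<ge> 1" using assms by simp
  have nz: "(\<lambda>i. z i powr ((real k + 1) / real k)) summable_on Z0"
  proof -
    have "(\<lambda>i. (lam i / (1 + T) ^ k) powr ((real k + 1) / real k)) summable_on Z0"
      by (rule pow_summ[OF assms(1) _ _ pp]) (use assms S in \<open>auto intro: less_imp_le one_le_power\<close>)
    moreover have "(\<lambda>i. z i powr ((real k + 1) / real k)) summable_on Z0 \<longleftrightarrow>
      (\<lambda>i. (lam i / (1 + T) ^ k) powr ((real k + 1) / real k)) summable_on Z0"
      by (rule summable_on_cong) (simp add: zi)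
    ultimately show ?thesis by blast
  qed
  have nzt: "(\<lambda>i. zt i powr ((real k + 1) / real k)) summable_on Z0"
  proof -
    have "(\<lambda>i. (lam i / (1 + S) ^ k) powr ((real k + 1) / real k)) summable_on Z0"
      by (rule pow_summ[OF assms(1) _ _ pp]) (use assms S in \<open>auto intro: less_imp_le one_le_power\<close>)
    moreover have "(\<lambda>i. zt i powr ((real k + 1) / real k)) summable_on Z0 \<longleftrightarrow>
      (\<lambda>i. (lam i / (1 + S) ^ k) powr ((real k + 1) / real k)) summable_on Z0"
      by (rule summable_on_cong) (simp add: zti)
    ultimately show ?thesis by blast
  qed
  have "p = (z, zt)" unfolding z_def zt_def by simp
  then show "p \<in> periodic_gibbs k lam"
    unfolding periodic_gibbs_def normalisable_def using bl nz nzt by auto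
qed

lemma mk_eq_iff:
  assumes "\<forall>j. lam j > 0" "k \<ge> 2" "S \<ge> 0" "T \<ge> 0" "S' \<ge> 0" "T' \<ge> 0"
  shows "mk lam k (S, T) = mk lam k (S', T') \<longleftrightarrow> S = S' \<and> T = T'"
proof
  assume h: "mk lam k (S, T) = mk lam k (S', T')"
  have a: "lam 1 / (1 + T) ^ k = lam 1 / (1 + T') ^ k"
    using fun_cong[OF arg_cong[OF h, of fst], of 1] unfolding mk_def by simp
  have b: "lam 1 / (1 + S) ^ k = lam 1 / (1 + S') ^ k"
    using fun_cong[OF arg_cong[OF h, of snd], of 1] unfolding mk_def by simp
  have l: "lam 1 \<noteq> 0" using assms(1) by (metis less_irrefl)
  have "(1 + T) ^ k = (1 + T') ^ k" using a l by (simp add: field_simps)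
  then have "T = T'" using assms power_eq_iff_eq_base[of k "1 + T" "1 + T'"] by simp
  moreover have "(1 + S) ^ k = (1 + S') ^ k" using b l by (simp add: field_simps)
  then have "S = S'" using assms power_eq_iff_eq_base[of k "1 + S" "1 + S'"] by simp
  ultimately show "S = S' \<and> T = T'" by simp
qed simp

lemma mk_inj:
  assumes "\<forall>j. lam j > 0" "k \<ge> 2"
  shows "inj_on (mk lam k) (sol k L)"
proof (rule inj_onI)
  fix p q assume h0: "p \<in> sol k L" "q \<in> sol k L" "mk lam k p = mk lam k q"
  note h = assms h0
  obtain S T where p: "p = (S, T)" by (cases p)
  obtain S' T' where q: "q = (S', T')" by (cases q)
  have "S \<ge> 0" "T \<ge> 0" "S' \<ge> 0" "T' \<ge> 0" using h(3,4) p q unfolding sol_def by auto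
  then show "p = q" using mk_eq_iff[OF h(1,2)] h(5) p q by simp
qed

lemma mk_transl:
  assumes "\<forall>j. lam j > 0" "k \<ge> 2" "S \<ge> 0" "T \<ge> 0"
  shows "transl_inv (mk lam k (S, T)) \<longleftrightarrow> S = T"
proof
  assume h: "transl_inv (mk lam k (S, T))"
  have a: "lam 1 / (1 + T) ^ k = lam 1 / (1 + S) ^ k"
    using fun_cong[OF h[unfolded transl_inv_def], of 1] unfolding mk_def by simp
  have l: "lam 1 \<noteq> 0" using assms(1) by (metis less_irrefl)
  have "(1 + T) ^ k = (1 + S) ^ k" using a l by (simp add: field_simps)
  then show "S = T" using assms power_eq_iff_eq_base[of k "1 + T" "1 + S"] by simp
next
  assume "S = T"
  then show "transl_inv (mk lam k (S, T))" unfolding transl_inv_def mk_def by (simp add: fun_eq_iff)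
qed


theorem mainTheorem2:
  fixes k :: nat and lam :: "int \<Rightarrow> real"
  assumes "k \<ge> 2"
    and "\<forall>j. lam j > 0"
  shows "(lam summable_on Z0 \<longrightarrow>
            (infsum lam Z0 \<le> Lambda_cr k \<longrightarrow>
               (\<exists>!p. p \<in> periodic_gibbs k lam) \<and>
               (\<forall>p\<in>periodic_gibbs k lam. transl_inv p)) \<and>
            (infsum lam Z0 > Lambda_cr k \<longrightarrow>
               finite (periodic_gibbs k lam) \<and> card (periodic_gibbs k lam) = 3 \<and>
               card {p\<in>periodic_gibbs k lam. transl_inv p} = 1))
       \<and> (\<not> lam summable_on Z0 \<longrightarrow> periodic_gibbs k lam = {})"
proof -
  have part2: "periodic_gibbs k lam = {}" if ns: "\<not> lam summable_on Z0"
  proof (rule ccontr)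
    assume "periodic_gibbs k lam \<noteq> {}"
    then obtain z zt where "(z, zt) \<in> periodic_gibbs k lam" by auto
    then show False using pg_lam_summable ns by blast
  qed
  have part1: "(infsum lam Z0 \<le> Lambda_cr k \<longrightarrow>
               (\<exists>!p. p \<in> periodic_gibbs k lam) \<and>
               (\<forall>p\<in>periodic_gibbs k lam. transl_inv p)) \<and>
            (infsum lam Z0 > Lambda_cr k \<longrightarrow>
               finite (periodic_gibbs k lam) \<and> card (periodic_gibbs k lam) = 3 \<and>
               card {p\<in>periodic_gibbs k lam. transl_inv p} = 1)"
    if summ: "lam summable_on Z0"
  proof -
    define L where "L = infsum lam Z0"
    have "lam 1 \<le> L" unfolding L_def
      by (rule term_le_infsum[OF summ]) (use assms one_Z0 in \<open>auto intro: less_imp_le\<close>)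
    then have L0: "L > 0" using assms(2) by (metis less_le_trans)
    have pg: "periodic_gibbs k lam = mk lam k ` sol k L"
      unfolding L_def using pg_sub[OF summ assms(2,1)] pg_sup[OF summ assms(2,1)] by blast
    have inj: "inj_on (mk lam k) (sol k L)" by (rule mk_inj[OF assms(2,1)])
    have tr: "transl_inv (mk lam k q) \<longleftrightarrow> fst q = snd q" if "q \<in> sol k L" for q
    proof -
      obtain S T where q: "q = (S, T)" by (cases q)
      have "S \<ge> 0" "T \<ge> 0" using that q unfolding sol_def by auto
      then show ?thesis using mk_transl[OF assms(2,1)] q by simp
    qed
    have A: "(\<exists>!p. p \<in> periodic_gibbs k lam) \<and> (\<forall>p\<in>periodic_gibbs k lam. transl_inv p)"
      if small: "L \<le> Lambda_cr k"
    proof -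
      obtain x where x: "sol k L = {(x, x)}" using sol_small[OF assms(1) L0 small] by blast
      have "periodic_gibbs k lam = {mk lam k (x, x)}" using pg x by simp
      moreover have "transl_inv (mk lam k (x, x))" using tr[of "(x, x)"] x by simp
      ultimately show ?thesis by auto
    qed
    have B: "finite (periodic_gibbs k lam) \<and> card (periodic_gibbs k lam) = 3 \<and>
               card {p\<in>periodic_gibbs k lam. transl_inv p} = 1"
      if large: "L > Lambda_cr k"
    proof -
      obtain x S0 T0 where x: "sol k L = {(x, x), (S0, T0), (T0, S0)}" "S0 \<noteq> T0"
        using sol_large[OF assms(1) large] by blast
      have fin: "finite (sol k L)" using x by simp
      have "card (sol k L) = 3" using x by auto
      then have c3: "card (periodic_gibbs k lam) = 3" using pg card_image[OF inj] by simp
      have "{p\<in>periodic_gibbs k lam. transl_inv p} = mk lam k ` {q \<in> sol k L. fst q = snd q}"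
        using pg tr by auto
      also have "{q \<in> sol k L. fst q = snd q} = {(x, x)}" using x by auto
      finally have "{p\<in>periodic_gibbs k lam. transl_inv p} = {mk lam k (x, x)}" by simp
      then show ?thesis using c3 fin pg by simp
    qed
    show ?thesis using A B unfolding L_def by blast
  qed
  show ?thesis using part1 part2 by blast
qed


end
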